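(* $$\sum_{n=1}^\infty \frac{H_n \binom{2n}{n}}{n\, 2^{2n}} = \frac{\pi^2}{3}.$$
   Context: $H_n=\sum_{k=1}^n \frac{1}{k}$ denotes the $n$-th harmonic number and $\binom{2n}{n}$ the central binomial coefficient. *)

theory Defs
  imports "HOL-Analysis.Analysis"
begin

end

theory Submission
  imports Defs
begin


definition cb :: "nat \<Rightarrow> real" where
  "cb n = real ((2*n) choose n) / 4^n"

lemma cb_alg:
  fixes F G P m :: real
  assumes "G > 0" "P > 0" "m \<ge> 0"
  shows "F*(2*m+1)*(2*m+2)/((G*(m+1))*(G*(m+1)))/(4*P) = F/(G*G)/P*(2*m+1)/(2*m+2)"
proof -
  define k where "k = m + 1"
  have k: "k > 0" "m = k - 1" using assms by (auto simp: k_def)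
  have "F*(2*k-1)*(2*k)/((G*k)*(G*k))/(4*P) = F/(G*G)/P*(2*k-1)/(2*k)"
    using assms k by (simp add: field_simps)
  moreover have "2*m+1 = 2*k-1" "2*m+2 = 2*k" "m+1 = k" using k by auto
  ultimately show ?thesis by (simp only:)
qed

lemma cbf: "real ((2*n) choose n) = fact (2*n) / (fact n * fact n)"
proof -
  have "real ((2*n) choose n) = fact (2*n) / (fact n * fact (2*n - n))" by (rule binomial_fact) simp
  also have "2*n - n = n" by simp
  finally show ?thesis .
qed

lemma fact2Suc: "fact (2 * Suc n) = (fact (2*n) :: real) * (2 * real n + 1) * (2 * real n + 2)"
proof -
  have "2 * Suc n = Suc (Suc (2*n))" by simp
  then have "fact (2 * Suc n) = (fact (Suc (Suc (2*n))) :: real)" by (simp only:)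
  also have "\<dots> = (fact (2*n) :: real) * (2 * real n + 1) * (2 * real n + 2)"
    by (simp only: fact_Suc) (simp add: algebra_simps)
  finally show ?thesis .
qed

lemma factSuc': "fact (Suc n) = (fact n :: real) * (real n+1)" by (simp add: algebra_simps)

lemma cb_Suc: "cb (Suc n) = cb n * (2*real n+1) / (2*real n+2)"
  unfolding cb_def cbf fact2Suc factSuc' power_Suc
  by (rule cb_alg) auto

lemma cb_0 [simp]: "cb 0 = 1" by (simp add: cb_def)

lemma cb_gchoose: "cb n = (-1)^n * ((-1/2) gchoose n)"
proof (induction n)
  case 0 then show ?case by simp
next
  case (Suc n)
  have "fact (Suc n) * ((-1/2::real) gchoose Suc n) = (\<Prod>i = 0..<Suc n. (-1/2) - of_nat i)"
    by (rule gbinomial_mult_fact)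
  also have "\<dots> = (fact n * ((-1/2::real) gchoose n)) * (-1/2 - n)"
    by (simp add: gbinomial_mult_fact)
  finally have "fact n * ((n+1) * ((-1/2::real) gchoose Suc n)) = fact n * (((-1/2::real) gchoose n) * (-1/2 - n))"
    by (simp add: algebra_simps)
  hence "(n+1) * ((-1/2::real) gchoose Suc n) = ((-1/2::real) gchoose n) * (-1/2 - n)"
    by (subst (asm) mult_left_cancel) auto
  hence G: "((-1/2::real) gchoose Suc n) = ((-1/2::real) gchoose n) * (-1/2 - n) / (n+1)"
    by (simp add: field_simps)
  show ?case
    apply (simp only: cb_Suc Suc.IH G power_Suc)
    apply (simp add: field_simps)
    done
qed

lemma cb_nonneg: "cb n \<ge> 0" by (simp add: cb_def)

lemma cb_le1: "cb n \<le> 1"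
proof (induction n)
  case (Suc n)
  have r: "(2*real n+1)/(2*real n+2) \<le> 1" "0 \<le> (2*real n+1)/(2*real n+2)" by auto
  have "cb (Suc n) = cb n * ((2*real n+1)/(2*real n+2))" by (simp only: cb_Suc times_divide_eq_right)
  also have "\<dots> \<le> cb n" using r cb_nonneg[of n] by (intro mult_right_le_one_le) auto
  finally have "cb (Suc n) \<le> cb n" .
  then show ?case using Suc by simp
qed simp

lemma cb_series: assumes "\<bar>x\<bar> < 1" shows "(\<lambda>n. cb n * x^n) sums (1 / sqrt (1 - x))"
proof -
  have "\<bar>-x\<bar> < 1" using assms by simp
  have S: "(\<lambda>n. ((-1/2) gchoose n) * (-x)^n) sums (1 + -x) powr (-1/2)"
    by (rule gen_binomial_real) fact
  have E: "(\<lambda>n. ((-1/2) gchoose n) * (-x)^n) = (\<lambda>n. cb n * x^n)"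
  proof
    fix n
    show "((-1/2) gchoose n) * (-x)^n = cb n * x^n"
    proof -
      have "(-x)^n = (-1)^n * x^n" by (rule power_minus)
      then show ?thesis using cb_gchoose[of n] by (metis mult.assoc mult.commute)
    qed
  qed
  have P: "(1 + -x) powr (-1/2) = 1 / sqrt (1-x)"
  proof -
    have "(1 + -x) powr (-1/2) = (1 - x) powr (-(1/2))" by simp
    also have "\<dots> = inverse ((1 - x) powr (1/2))" by (rule powr_minus)
    also have "(1 - x) powr (1/2) = sqrt (1 - x)" using assms by (intro powr_half_sqrt) simp
    also have "inverse (sqrt (1 - x)) = 1 / sqrt (1 - x)" by (rule inverse_eq_divide)
    finally show ?thesis .
  qed
  show ?thesis using S unfolding E P .
qed



lemma mono_series_integral:
  fixes t :: "nat \<Rightarrow> real \<Rightarrow> real" and c :: "nat \<Rightarrow> real"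
  assumes int: "\<And>m. (t m has_integral c m) S"
    and nonneg: "\<And>m x. x \<in> S \<Longrightarrow> 0 \<le> t m x"
    and ptw: "\<And>x. x \<in> S \<Longrightarrow> (\<lambda>m. t m x) sums g x"
    and cs: "c sums L"
  shows "(g has_integral L) S"
proof -
  define F where "F M x = (\<Sum>m<M. t m x)" for M x
  have intF: "(F M has_integral (\<Sum>m<M. c m)) S" for M
    unfolding F_def by (rule has_integral_sum) (auto intro: int)
  have I: "(\<lambda>k. integral S (F k)) = (\<lambda>k. \<Sum>m<k. c m)"
    using intF by (auto intro!: ext integral_unique)
  have "g integrable_on S \<and> ((\<lambda>M. integral S (F M)) \<longlonglongrightarrow> integral S g)"
  proof (rule monotone_convergence_increasing)
    show "F k integrable_on S" for k using intF by blast
    show "F k x \<le> F (Suc k) x" if "x \<in> S" for k x using nonneg[OF that] by (simp add: F_def)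
    show "(\<lambda>k. F k x) \<longlonglongrightarrow> g x" if "x \<in> S" for x using ptw[OF that] unfolding F_def sums_def .
    show "bounded (range (\<lambda>k. integral S (F k)))"
      unfolding I using cs unfolding sums_def by (rule convergent_imp_bounded)
  qed
  moreover have "(\<lambda>k. integral S (F k)) \<longlonglongrightarrow> L" unfolding I using cs unfolding sums_def .
  ultimately have "integral S g = L" "g integrable_on S" using LIMSEQ_unique by blast+
  then show ?thesis using has_integral_integrable_integral by blast
qed

lemma mono_series_integral2:
  fixes t :: "nat \<Rightarrow> real \<Rightarrow> real" and c :: "nat \<Rightarrow> real"
  assumes int: "\<And>m. (t m has_integral c m) S"
    and nonneg: "\<And>m x. x \<in> S \<Longrightarrow> 0 \<le> t m x"
    and ptw: "\<And>x. x \<in> S \<Longrightarrow> (\<lambda>m. t m x) sums g x"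
    and gint: "(g has_integral L) S"
  shows "c sums L"
proof -
  define F where "F M x = (\<Sum>m<M. t m x)" for M x
  have intF: "(F M has_integral (\<Sum>m<M. c m)) S" for M
    unfolding F_def by (rule has_integral_sum) (auto intro: int)
  have I: "(\<lambda>k. integral S (F k)) = (\<lambda>k. \<Sum>m<k. c m)"
    using intF by (auto intro!: ext integral_unique)
  have cnn: "0 \<le> c m" for m using int[of m] nonneg by (rule has_integral_nonneg)
  have Fle: "F k x \<le> g x" if "x \<in> S" for k x
  proof -
    have "F k x \<le> suminf (\<lambda>m. t m x)" unfolding F_def
      using ptw[OF that] nonneg[OF that] by (intro sum_le_suminf) (auto simp: sums_iff)
    also have "\<dots> = g x" using ptw[OF that] by (simp add: sums_iff)
    finally show ?thesis .
  qed
  have "g integrable_on S \<and> ((\<lambda>M. integral S (F M)) \<longlonglongrightarrow> integral S g)"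
  proof (rule monotone_convergence_increasing)
    show "F k integrable_on S" for k using intF by blast
    show "F k x \<le> F (Suc k) x" if "x \<in> S" for k x using nonneg[OF that] by (simp add: F_def)
    show "(\<lambda>k. F k x) \<longlonglongrightarrow> g x" if "x \<in> S" for x using ptw[OF that] unfolding F_def sums_def .
    have r1: "0 \<le> (\<Sum>m<k. c m)" for k using cnn by (simp add: sum_nonneg)
    have r2: "(\<Sum>m<k. c m) \<le> L" for k using intF[of k] gint Fle by (rule has_integral_le)
    have "range (\<lambda>k. \<Sum>m<k. c m) \<subseteq> {0..L}" using r1 r2 by auto
    then show "bounded (range (\<lambda>k. integral S (F k)))"
      unfolding I by (rule bounded_subset[OF bounded_closed_interval])
  qed
  then have "(\<lambda>k. \<Sum>m<k. c m) \<longlonglongrightarrow> L" unfolding I using gint by (simp add: integral_unique)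
  then show ?thesis unfolding sums_def .
qed

lemma int_pow01: "((\<lambda>u. u^m) has_integral (1/(real m+1))) {0..1::real}"
proof -
  have "((\<lambda>u. u^m) has_integral ((\<lambda>u. u^(Suc m)/(real m+1)) 1 - (\<lambda>u. u^(Suc m)/(real m+1)) 0)) {0..1::real}"
  proof (rule fundamental_theorem_of_calculus)
    fix x :: real assume "x \<in> {0..1}"
    have "((\<lambda>u. u^(Suc m)) has_real_derivative (real (Suc m) * x^m)) (at x)"
      using DERIV_pow[of "Suc m" x] by simp
    then have "((\<lambda>u. u^(Suc m)/(real m+1)) has_real_derivative (real (Suc m) * x^m / (real m+1))) (at x)"
      by (rule DERIV_cdivide)
    then have "((\<lambda>u. u^(Suc m)/(real m+1)) has_real_derivative (real (Suc m) * x^m / (real m+1))) (at x within {0..1})"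
      by (rule has_field_derivative_at_within)
    moreover have "real (Suc m) * x^m / (real m+1) = x^m"
    proof -
      have "real m + 1 \<noteq> 0" by simp
      then show ?thesis by (simp add: field_simps)
    qed
    ultimately show "((\<lambda>u. u^(Suc m)/(real m+1)) has_vector_derivative x^m) (at x within {0..1})"
      by (simp add: has_real_derivative_iff_has_vector_derivative)
  qed simp
  then show ?thesis by simp
qed

lemma int_piece: "((\<lambda>u. 2*u*(1-u^2)^j) has_integral (1/(real j+1))) {0..1::real}"
proof -
  let ?F = "\<lambda>u::real. -((1-u^2)^(Suc j))/(real j+1)"
  have "((\<lambda>u. 2*u*(1-u^2)^j) has_integral (?F 1 - ?F 0)) {0..1::real}"
  proof (rule fundamental_theorem_of_calculus)
    fix x :: real assume "x \<in> {0..1}"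
    have "(?F has_real_derivative (-(real (Suc j) * (1-x^2)^j * (0 - 2*x))/(real j+1))) (at x within {0..1})"
      by (rule derivative_eq_intros refl | simp)+
    moreover have "-(real (Suc j) * (1-x^2)^j * (0 - 2*x))/(real j+1) = 2*x*(1-x^2)^j"
    proof -
      have "real j + 1 \<noteq> 0" by simp
      then show ?thesis by (simp add: field_simps)
    qed
    ultimately show "(?F has_vector_derivative 2*x*(1-x^2)^j) (at x within {0..1})"
      by (simp add: has_real_derivative_iff_has_vector_derivative)
  qed simp
  then show ?thesis by simp
qed



definition ca :: "nat \<Rightarrow> real" where "ca n = cb n / real n"

lemma ca_nonneg: "ca n \<ge> 0" by (simp add: ca_def cb_nonneg)
lemma ca_le1: "ca n \<le> 1"
proof (cases n)
  case (Suc m)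
  have "cb n * 1 \<le> cb n * real n" using cb_nonneg[of n] Suc by (intro mult_left_mono) auto
  hence "cb n / real n \<le> cb n" using Suc by (simp add: divide_le_eq)
  then show ?thesis using cb_le1[of n] by (simp add: ca_def)
qed (simp add: ca_def)

lemma ca_summable: assumes "\<bar>x\<bar> < 1" shows "summable (\<lambda>n. ca n * x^n)"
proof (rule summable_comparison_test)
  show "\<exists>N. \<forall>n\<ge>N. norm (ca n * x^n) \<le> \<bar>x\<bar>^n"
    using ca_nonneg ca_le1 by (auto simp: abs_mult power_abs intro!: mult_left_le_one_le)
  show "summable (\<lambda>n. \<bar>x\<bar>^n)" using assms by (simp add: summable_geometric)
qed

definition ff :: "real \<Rightarrow> real" where "ff x = (\<Sum>n. ca n * x^n)"

lemma diffs_ca: "diffs ca n = cb (Suc n)"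
  by (simp add: diffs_def ca_def)

lemma ff_deriv: assumes "\<bar>x\<bar> < 1"
  shows "(ff has_real_derivative (\<Sum>n. cb (Suc n) * x^n)) (at x)"
proof -
  have "((\<lambda>z. \<Sum>n. ca n * z^n) has_field_derivative (\<Sum>n. diffs ca n * x^n)) (at x)"
    by (rule termdiffs_strong'[where K=1]) (use assms ca_summable in auto)
  then show ?thesis unfolding ff_def[abs_def] diffs_ca .
qed

lemma ff_deriv_val: assumes "\<bar>x\<bar> < 1"
  shows "(\<Sum>n. cb (Suc n) * x^n) = 1 / (sqrt (1-x) * (1 + sqrt (1-x)))"
proof (cases "x = 0")
  case True
  have "(\<Sum>n. cb (Suc n) * 0^n) = cb 1" by (subst powser_zero) simp
  also have "cb 1 = 1/2" by (simp add: cb_def)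
  finally show ?thesis using True by simp
next
  case False
  have "(\<lambda>n. cb n * x^n) sums (1 / sqrt (1 - x))" by (rule cb_series[OF assms])
  hence "(\<lambda>n. cb (Suc n) * x^(Suc n)) sums (1 / sqrt (1 - x) - 1)"
    by (subst sums_Suc_iff) simp
  hence S: "(\<lambda>n. x * (cb (Suc n) * x^n)) sums (1 / sqrt (1 - x) - 1)"
    by (simp add: algebra_simps)
  have "(\<lambda>n. cb (Suc n) * x^n) sums ((1 / sqrt (1 - x) - 1) / x)"
    using sums_divide[OF S, of x] False by simp
  hence "(\<Sum>n. cb (Suc n) * x^n) = (1 / sqrt (1 - x) - 1) / x" by (rule sums_unique[symmetric])
  also have "\<dots> = 1 / (sqrt (1-x) * (1 + sqrt (1-x)))"
  proof -
    define s where "s = sqrt (1-x)"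
    have s: "s > 0" "s^2 = 1 - x" using assms by (auto simp: s_def)
    have xs: "x = (1 - s) * (1 + s)" using s by (simp add: algebra_simps power2_eq_square)
    have "1 - s \<noteq> 0" using False xs by auto
    moreover have "s*(1+s) \<noteq> 0" "s \<noteq> 0" using s(1) by auto
    moreover have "(1-s)*(1+s) \<noteq> 0" using False xs by simp
    ultimately have "(1/s - 1)/((1-s)*(1+s)) = 1/(s*(1+s))" by (simp add: field_simps)
    then show ?thesis unfolding s_def[symmetric] using xs by simp
  qed
  finally show ?thesis .
qed

lemma ff_closed: assumes "\<bar>x\<bar> < 1"
  shows "ff x = 2 * ln 2 - 2 * ln (1 + sqrt (1 - x))"
proof -
  define h where "h x = ff x + 2 * ln (1 + sqrt (1 - x))" for x
  have "h x = h 0"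
  proof (rule DERIV_isconst3[of "-1" 1 x 0 h])
    fix y :: real assume y: "y \<in> {-1<..<1}"
    hence y': "\<bar>y\<bar> < 1" by auto
    have "((\<lambda>x. 2 * ln (1 + sqrt (1 - x))) has_real_derivative
           2 * (1 / (1 + sqrt (1 - y)) * (inverse (sqrt (1 - y)) / 2 * (0 - 1)))) (at y)"
      using y by (auto intro!: derivative_eq_intros simp: add_pos_nonneg)
    moreover have "2 * (1 / (1 + sqrt (1 - y)) * (inverse (sqrt (1 - y)) / 2 * (0 - 1)))
        = - (1 / (sqrt (1-y) * (1 + sqrt (1-y))))"
    proof -
      have s0: "sqrt (1-y) > 0" using y by simp
      hence "1 + sqrt (1-y) - y > 0" using y' by linarith
      note s0 this
      then show ?thesis by (simp add: field_simps)
    qed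
    ultimately have "((\<lambda>x. 2 * ln (1 + sqrt (1 - x))) has_real_derivative
           - (1 / (sqrt (1-y) * (1 + sqrt (1-y))))) (at y)" by simp
    from DERIV_add[OF ff_deriv[OF y'] this]
    show "DERIV h y :> 0" unfolding h_def[abs_def] using ff_deriv_val[OF y'] by simp
  qed (use assms in auto)
  moreover have "ff 0 = 0" unfolding ff_def by (subst powser_zero) (simp add: ca_def)
  ultimately show ?thesis by (simp add: h_def)
qed




lemma ff_le: assumes "0 \<le> x" "x < 1" shows "ff x \<le> 2 * ln 2"
  using ff_closed[of x] assms by simp

lemma ca_partial_le: "(\<Sum>n<N. ca n) \<le> 2 * ln 2"
proof (rule tendsto_le[of "at_left (1::real)"])
  have "((\<lambda>x. \<Sum>n<N. ca n * x^n) \<longlongrightarrow> (\<Sum>n<N. ca n * 1^n)) (at_left 1)"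
    by (intro tendsto_intros)
  then show "((\<lambda>x. \<Sum>n<N. ca n * x^n) \<longlongrightarrow> (\<Sum>n<N. ca n)) (at_left 1)" by simp
  show "((\<lambda>x. 2 * ln 2) \<longlongrightarrow> 2 * ln 2) (at_left 1)" by simp
  have "eventually (\<lambda>x. x \<in> {0<..<1}) (at_left (1::real))" by (rule eventually_at_left_real) simp
  then show "eventually (\<lambda>x. (\<Sum>n<N. ca n * x^n) \<le> 2 * ln 2) (at_left 1)"
  proof eventually_elim
    case (elim x)
    hence "(\<Sum>n<N. ca n * x^n) \<le> ff x" unfolding ff_def
      by (intro sum_le_suminf ca_summable) (auto intro!: mult_nonneg_nonneg ca_nonneg)
    also have "\<dots> \<le> 2 * ln 2" using elim by (intro ff_le) auto
    finally show ?case .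
  qed
qed simp

lemma ca_summable1: "summable ca"
  by (rule summableI_nonneg_bounded[OF ca_nonneg ca_partial_le])

lemma ca_sums: "ca sums (2 * ln 2)"
proof -
  have le: "suminf ca \<le> 2 * ln 2" by (rule suminf_le_const[OF ca_summable1 ca_partial_le])
  have ge: "2 * ln 2 \<le> suminf ca"
  proof (rule tendsto_le[of "at_left (1::real)"])
    show "((\<lambda>x. suminf ca) \<longlongrightarrow> suminf ca) (at_left 1)" by simp
    have "((\<lambda>x. 2 * ln 2 - 2 * ln (1 + sqrt (1 - x))) \<longlongrightarrow> 2 * ln 2 - 2 * ln (1 + sqrt (1 - 1))) (at_left (1::real))"
      by (intro tendsto_intros) auto
    hence lim: "((\<lambda>x. 2 * ln 2 - 2 * ln (1 + sqrt (1 - x))) \<longlongrightarrow> 2 * ln 2) (at_left (1::real))" by simp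
    have ev: "eventually (\<lambda>x. x \<in> {0<..<1}) (at_left (1::real))" by (rule eventually_at_left_real) simp
    have "eventually (\<lambda>x. 2 * ln 2 - 2 * ln (1 + sqrt (1 - x)) = ff x) (at_left (1::real))"
      using ev by eventually_elim (simp add: ff_closed)
    from Lim_transform_eventually[OF lim this]
    show "(ff \<longlongrightarrow> 2 * ln 2) (at_left 1)" .
    show "eventually (\<lambda>x. ff x \<le> suminf ca) (at_left 1)"
      using ev
    proof eventually_elim
      case (elim x)
      show ?case unfolding ff_def
        using elim by (intro suminf_le ca_summable ca_summable1)
          (auto intro!: mult_left_le_one_le ca_nonneg power_le_one simp: mult.commute[of "ca _"])
    qed
  qed simp
  from le ge have "suminf ca = 2 * ln 2" by simp
  with ca_summable1 show ?thesis by (simp add: summable_sums_iff)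
qed



lemma pow_int_Ioo: "((\<lambda>u. u^m) has_integral (1/(real m+1))) {0<..<1::real}"
  using int_pow01[of m] by (simp add: has_integral_Icc_iff_Ioo)

lemma basel': "(\<lambda>m. 1 / (real m + 1)^2) sums (pi^2/6)"
  using inverse_squares_sums by (simp add: add.commute)

lemma log_series1: assumes "0 < u" "u < (1::real)"
  shows "(\<lambda>n. u^(Suc n) / real (Suc n)) sums (- ln (1 - u))"
proof -
  have "\<bar>-u\<bar> < 1" using assms by simp
  from ln_series'[OF this] have "(\<lambda>n. - (u^n) / real n) sums ln (1 - u)" by simp
  from sums_minus[OF this] have "(\<lambda>n. u^n / real n) sums (- ln (1 - u))" by simp
  then show ?thesis by (subst sums_Suc_iff) simp
qed

lemma A_int: "((\<lambda>u. - 4 * ln (1 - u) / u) has_integral (4 * (pi^2/6))) {0<..<1::real}"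
proof (rule mono_series_integral[where t = "\<lambda>m u. 4 / (real m + 1) * u^m"
      and c = "\<lambda>m. 4 / (real m + 1) * (1 / (real m + 1))"])
  show "((\<lambda>u. 4 / (real m + 1) * u^m) has_integral (4 / (real m + 1) * (1 / (real m + 1)))) {0<..<1}" for m
    by (rule has_integral_mult_right) (rule pow_int_Ioo)
  show "0 \<le> 4 / (real m + 1) * x^m" if "x \<in> {0<..<1}" for m x using that by simp
  show "(\<lambda>m. 4 / (real m + 1) * (1 / (real m + 1))) sums (4 * (pi^2/6))"
    using sums_mult[OF basel', of 4] by (simp add: power2_eq_square)
  show "(\<lambda>m. 4 / (real m + 1) * x^m) sums (- 4 * ln (1 - x) / x)" if x: "x \<in> {0<..<1}" for x
  proof -
    have x0: "0 < x" "x < 1" using x by auto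
    from sums_mult[OF log_series1[OF x0], of "4/x"]
    have "(\<lambda>n. 4 / x * (x ^ Suc n / real (Suc n))) sums (4 / x * - ln (1 - x))" .
    moreover have "4 / x * (x ^ Suc n / real (Suc n)) = 4 / (real n + 1) * x^n" for n
      using x0 by (simp add: field_simps)
    moreover have "4 / x * - ln (1 - x) = - 4 * ln (1 - x) / x" by simp
    ultimately show ?thesis by simp
  qed
qed

lemma B_int: "((\<lambda>u. - 4 * ln (1 - u^2) / u) has_integral (2 * (pi^2/6))) {0<..<1::real}"
proof (rule mono_series_integral[where t = "\<lambda>m u. 4 / (real m + 1) * u^(2*m+1)"
      and c = "\<lambda>m. 4 / (real m + 1) * (1 / (real (2*m+1) + 1))"])
  show "((\<lambda>u. 4 / (real m + 1) * u^(2*m+1)) has_integral (4 / (real m + 1) * (1 / (real (2*m+1) + 1)))) {0<..<1}" for m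
    by (rule has_integral_mult_right) (rule pow_int_Ioo)
  show "0 \<le> 4 / (real m + 1) * x^(2*m+1)" if "x \<in> {0<..<1}" for m x using that by simp
  have kk: "4 / k * (1 / (2 * k)) = 2 * (1 / k^2)" if "k > 0" for k :: real
    using that by (simp add: field_simps power2_eq_square)
  have "4 / (real m + 1) * (1 / (real (2*m+1) + 1)) = 2 * (1 / (real m + 1)^2)" for m
  proof -
    have "real (2*m+1) + 1 = 2 * (real m + 1)" by simp
    then show ?thesis by (simp only:) (rule kk, simp)
  qed
  then show "(\<lambda>m. 4 / (real m + 1) * (1 / (real (2*m+1) + 1))) sums (2 * (pi^2/6))"
    using sums_mult[OF basel', of 2] by simp
  show "(\<lambda>m. 4 / (real m + 1) * x^(2*m+1)) sums (- 4 * ln (1 - x^2) / x)" if x: "x \<in> {0<..<1}" for x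
  proof -
    have x0: "0 < x^2" "x^2 < 1" "x > 0" using x by (auto simp: power_less_one_iff)
    from sums_mult[OF log_series1[OF x0(1,2)], of "4/x"]
    have "(\<lambda>n. 4 / x * ((x^2) ^ Suc n / real (Suc n))) sums (4 / x * - ln (1 - x^2))" .
    moreover have "4 / x * ((x^2) ^ Suc n / real (Suc n)) = 4 / (real n + 1) * x^(2*n+1)" for n
    proof -
      have "(x^2) ^ Suc n = x^(2 * Suc n)" by (rule power_mult[symmetric])
      also have "2 * Suc n = Suc (2*n+1)" by simp
      also have "x ^ Suc (2*n+1) = x * x^(2*n+1)" by (rule power_Suc)
      finally have "(x^2) ^ Suc n = x * x^(2*n+1)" .
      then show ?thesis using x0 by (simp add: field_simps)
    qed
    moreover have "4 / x * - ln (1 - x^2) = - 4 * ln (1 - x^2) / x" by simp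
    ultimately show ?thesis by simp
  qed
qed

lemma g_int: "((\<lambda>u. 4 * ln (1 + u) / u) has_integral (pi^2/3)) {0<..<1::real}"
proof -
  have H: "((\<lambda>u. - 4 * ln (1 - u) / u - (- 4 * ln (1 - u^2) / u)) has_integral
          (4 * (pi^2/6) - 2 * (pi^2/6))) {0<..<1::real}"
    by (rule has_integral_diff[OF A_int B_int])
  have e: "4 * (pi^2/6) - 2 * (pi^2/6) = pi^2/3" by simp
  have H2: "((\<lambda>u. - 4 * ln (1 - u) / u - (- 4 * ln (1 - u^2) / u)) has_integral
          (pi^2/3)) {0<..<1::real}" using H unfolding e .
  have eq: "- 4 * ln (1 - u) / u - (- 4 * ln (1 - u^2) / u) = 4 * ln (1 + u) / u"
    if "u \<in> {0<..<1::real}" for u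
  proof -
    have u: "0 < u" "u < 1" using that by auto
    have "1 - u^2 = (1 - u) * (1 + u)" by (simp add: algebra_simps power2_eq_square)
    hence "ln (1 - u^2) = ln (1 - u) + ln (1 + u)" using u by (simp add: ln_mult)
    then show ?thesis using u by (simp add: field_simps)
  qed
  have "(((\<lambda>u. - 4 * ln (1 - u) / u - (- 4 * ln (1 - u^2) / u)) has_integral (pi^2/3)) {0<..<1::real})
     = (((\<lambda>u. 4 * ln (1 + u) / u) has_integral (pi^2/3)) {0<..<1::real})"
    by (rule has_integral_cong) (rule eq)
  with H2 show ?thesis by blast
qed



definition pp :: "nat \<Rightarrow> real \<Rightarrow> real" where
  "pp n u = 2 * u * (\<Sum>j<n. (1 - u^2)^j)"

lemma pp_int: "(pp n has_integral harm n) {0<..<1}"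
proof -
  have "((\<lambda>u. \<Sum>j<n. 2*u*(1-u^2)^j) has_integral (\<Sum>j<n. 1/(real j+1))) {0..1::real}"
    by (rule has_integral_sum) (auto intro: int_piece)
  moreover have "(\<lambda>u. \<Sum>j<n. 2*u*(1-u^2)^j) = pp n"
    by (rule ext) (simp add: pp_def sum_distrib_left)
  moreover have "(\<Sum>j<n. 1/(real j+1)) = harm n"
    by (simp add: harm_altdef field_simps)
  ultimately have "(pp n has_integral harm n) {0..1}" by simp
  then show ?thesis by (simp add: has_integral_Icc_iff_Ioo)
qed

lemma pp_nonneg: assumes "u \<in> {0<..<1::real}" shows "0 \<le> pp n u"
proof -
  have "0 \<le> 1 - u^2" using assms by (simp add: power_le_one)
  then show ?thesis using assms unfolding pp_def by (intro mult_nonneg_nonneg sum_nonneg) auto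
qed

lemma pp_closed: assumes "u \<in> {0<..<1::real}" shows "pp n u = 2 / u * (1 - (1 - u^2)^n)"
proof -
  have u: "u > 0" using assms by auto
  have "1 - (1 - u^2)^n = (1 - (1 - u^2)) * (\<Sum>j<n. (1 - u^2)^j)"
    by (rule one_diff_power_eq)
  also have "1 - (1 - u^2) = u * u" by (simp add: power2_eq_square)
  finally have "2 / u * (1 - (1 - u^2)^n) = 2 / u * (u * u * (\<Sum>j<n. (1 - u^2)^j))" by simp
  also have "\<dots> = pp n u" using u unfolding pp_def by (simp add: field_simps)
  finally show ?thesis ..
qed

lemma pp_sums: assumes "u \<in> {0<..<1::real}" shows "(\<lambda>n. ca n * pp n u) sums (4 * ln (1 + u) / u)"
proof -
  have u: "0 < u" "u < 1" using assms by auto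
  define x where "x = 1 - u^2"
  have x: "0 \<le> x" "x < 1" "\<bar>x\<bar> < 1" using u by (auto simp: x_def power_le_one power_less_one_iff)
  have s1: "(\<lambda>n. ca n * x^n) sums ff x" unfolding ff_def using ca_summable[OF x(3)] by (simp add: summable_sums)
  have s2: "(\<lambda>n. ca n - ca n * x^n) sums (2 * ln 2 - ff x)" by (rule sums_diff[OF ca_sums s1])
  have "sqrt (1 - x) = u" using u by (simp add: x_def)
  hence "2 * ln 2 - ff x = 2 * ln (1 + u)" using ff_closed[OF x(3)] by simp
  with s2 have s3: "(\<lambda>n. ca n - ca n * x^n) sums (2 * ln (1 + u))" by simp
  from sums_mult[OF s3, of "2/u"]
  have "(\<lambda>n. 2/u * (ca n - ca n * x^n)) sums (2/u * (2 * ln (1 + u)))" .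
  moreover have "2/u * (ca n - ca n * x^n) = ca n * pp n u" for n
  proof -
    have "2/u * (ca n - ca n * x^n) = ca n * (2/u * (1 - x^n))" using u by (simp add: field_simps)
    also have "\<dots> = ca n * pp n u" using pp_closed[OF assms, of n] by (simp add: x_def)
    finally show ?thesis .
  qed
  moreover have "2/u * (2 * ln (1 + u)) = 4 * ln (1 + u) / u" by simp
  ultimately show ?thesis by simp
qed

lemma main_sums: "(\<lambda>n. ca n * harm n) sums (pi^2/3)"
proof (rule mono_series_integral2[where t = "\<lambda>n u. ca n * pp n u" and S = "{0<..<1}"
      and g = "\<lambda>u. 4 * ln (1 + u) / u"])
  show "((\<lambda>u. ca m * pp m u) has_integral (ca m * harm m)) {0<..<1}" for m
    by (rule has_integral_mult_right) (rule pp_int)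
  show "0 \<le> ca m * pp m x" if "x \<in> {0<..<1}" for m x
    using that by (intro mult_nonneg_nonneg ca_nonneg pp_nonneg)
  show "(\<lambda>m. ca m * pp m x) sums (4 * ln (1 + x) / x)" if "x \<in> {0<..<1}" for x
    using that by (rule pp_sums)
  show "((\<lambda>u. 4 * ln (1 + u) / u) has_integral pi^2/3) {0<..<1}" by (rule g_int)
qed

theorem mainTheorem1:
  shows "(\<lambda>n. harm (Suc n) * real ((2 * Suc n) choose (Suc n)) / (real (Suc n) * 2 ^ (2 * Suc n)))
           sums (pi\<^sup>2 / 3)"
proof -
  have eq: "harm (Suc n) * real ((2 * Suc n) choose (Suc n)) / (real (Suc n) * 2 ^ (2 * Suc n))
        = ca (Suc n) * harm (Suc n)" for n
  proof -
    have p: "(2::real) ^ (2 * Suc n) = 4 ^ Suc n" by (simp add: power_mult)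
    have g: "h*c/(m*p) = c/p/m*h" for h c m p :: real
      by (simp add: divide_divide_eq_left ac_simps)
    show ?thesis unfolding ca_def cb_def p by (rule g)
  qed
  have "(\<lambda>n. ca (Suc n) * harm (Suc n)) sums (pi\<^sup>2 / 3)"
    using main_sums by (subst sums_Suc_iff) (simp add: ca_def)
  then show ?thesis unfolding eq .
qed


end
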